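(* For every $(r,s,i,j)\in\mu^{-1}(0)^{rss}$, the closure of the orbit $B\cdot(r,s,i,j)$ contains a point of the form $(\operatorname{diag}(r),d,0,0)$ with $d$ a diagonal matrix.
   Context: $B\subset GL_n(\mathbb{C})$ is the group of invertible upper triangular matrices, $\mathfrak{b}$ the upper triangular matrices, $\mathfrak{n}^+$ strictly upper triangular, $\mathfrak{b}^*=\mathfrak{gl}_n/\mathfrak{n}^+$. $B$ acts on $\mathfrak{b}\times\mathfrak{b}^*\times\mathbb{C}^n\times(\mathbb{C}^n)^*$ by $b\cdot(r,s,i,j)=(brb^{-1},bsb^{-1},bi,jb^{-1})$, with moment map $\mu(r,s,i,j)=[r,s]+ij\bmod\mathfrak{n}^+$; $\mu^{-1}(0)^{rss}$ is the set of zeros of $\mu$ with $r$ having pairwise distinct diagonal entries. $\operatorname{diag}(r)$ is the diagonal matrix with the diagonal entries of $r$. *)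

theory Defs
  imports "HOL-Analysis.Analysis"
begin

text \<open>Matrices are indexed by a finite linearly ordered type 'n (a copy of {1..n}).
  b = upper triangular matrices; b* = gl_n / n+ is represented by its canonical
  representatives, the lower triangular matrices (entries above the diagonal zero).\<close>

definition upper_tri :: "('a::zero)^('n::{finite,linorder})^('n::{finite,linorder}) \<Rightarrow> bool" where
  "upper_tri M \<longleftrightarrow> (\<forall>a b. b < a \<longrightarrow> M $ a $ b = 0)"

definition lower_tri :: "('a::zero)^('n::{finite,linorder})^('n::{finite,linorder}) \<Rightarrow> bool" where
  "lower_tri M \<longleftrightarrow> (\<forall>a b. a < b \<longrightarrow> M $ a $ b = 0)"

definition mod_nplus :: "('a::zero)^('n::{finite,linorder})^('n::{finite,linorder}) \<Rightarrow> 'a^('n::{finite,linorder})^('n::{finite,linorder})" where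
  "mod_nplus M = (\<chi> a b. if a < b then 0 else M $ a $ b)"

definition diag_part :: "('a::zero)^('n::finite)^('n::finite) \<Rightarrow> 'a^('n::finite)^('n::finite)" where
  "diag_part M = (\<chi> a b. if a = b then M $ a $ b else 0)"

definition is_diag :: "('a::zero)^('n::finite)^('n::finite) \<Rightarrow> bool" where
  "is_diag M \<longleftrightarrow> (\<forall>a b. a \<noteq> b \<longrightarrow> M $ a $ b = 0)"

definition outer :: "complex^('n::finite) \<Rightarrow> complex^('n::finite) \<Rightarrow> complex^('n::finite)^('n::finite)" where
  "outer i j = (\<chi> a b. i $ a * j $ b)"

definition borel :: "(complex^('n::{finite,linorder})^('n::{finite,linorder})) set" where
  "borel = {g. invertible g \<and> upper_tri g}"

type_synonym 'n quad = "(complex^'n^'n) \<times> (complex^'n^'n) \<times> (complex^'n) \<times> (complex^'n)"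

definition B_act :: "complex^('n::{finite,linorder})^('n::{finite,linorder}) \<Rightarrow> ('n::{finite,linorder}) quad \<Rightarrow> ('n::{finite,linorder}) quad" where
  "B_act g x = (case x of (r, s, i, j) \<Rightarrow>
     (g ** r ** matrix_inv g, mod_nplus (g ** s ** matrix_inv g), g *v i, j v* matrix_inv g))"

definition B_orbit :: "('n::{finite,linorder}) quad \<Rightarrow> ('n::{finite,linorder}) quad set" where
  "B_orbit x = (\<lambda>g. B_act g x) ` borel"

definition moment :: "('n::{finite,linorder}) quad \<Rightarrow> complex^('n::{finite,linorder})^('n::{finite,linorder})" where
  "moment x = (case x of (r, s, i, j) \<Rightarrow> mod_nplus (r ** s - s ** r + outer i j))"

definition mu_zero_rss :: "('n::{finite,linorder}) quad set" where
  "mu_zero_rss = {(r, s, i, j). upper_tri r \<and> lower_tri s \<and> moment (r, s, i, j) = 0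
                    \<and> (\<forall>a b. a \<noteq> b \<longrightarrow> r $ a $ a \<noteq> r $ b $ b)}"

end

theory Submission
  imports Defs
begin

lemma sum_single:
  fixes f :: "'n::finite \<Rightarrow> 'a::comm_monoid_add"
  assumes "\<And>c. c \<noteq> a \<Longrightarrow> f c = 0"
  shows "sum f UNIV = f a"
proof -
  have "sum f UNIV = f a + sum f (UNIV - {a})"
    by (simp add: sum.remove)
  also have "sum f (UNIV - {a}) = 0" using assms by (intro sum.neutral) auto
  finally show ?thesis by simp
qed

lemma down_induct:
  fixes a :: "'n::{finite,linorder}"
  assumes step: "\<And>a. (\<And>c. a < c \<Longrightarrow> P c) \<Longrightarrow> P a"
  shows "P a"
proof -
  have "\<forall>a. card {c. a < c} = n \<longrightarrow> P a" for n
  proof (induction n rule: less_induct)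
    case (less n)
    show ?case
    proof (intro allI impI)
      fix a assume an: "card {c. a < (c::'n)} = n"
      show "P a"
      proof (rule step)
        fix c assume "a < c"
        have "{d. c < d} \<subset> {d. a < d}" using \<open>a < c\<close> by auto
        hence "card {d. c < d} < card {d. a < d}" by (intro psubset_card_mono) auto
        thus "P c" using less an by auto
      qed
    qed
  qed
  thus ?thesis by blast
qed

lemma inv_facts:
  fixes A :: "'a::field^'n::finite^'n"
  assumes "invertible A"
  shows "A ** matrix_inv A = mat 1" "matrix_inv A ** A = mat 1"
proof -
  have "\<exists>A'. A ** A' = mat 1 \<and> A' ** A = mat 1" using assms unfolding invertible_def by blast
  then show "A ** matrix_inv A = mat 1" "matrix_inv A ** A = mat 1"
    unfolding matrix_inv_def by (metis (mono_tags, lifting) someI_ex)+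
qed

lemma inv_unique:
  fixes A B :: "'a::field^'n::finite^'n"
  assumes "A ** B = mat 1"
  shows "matrix_inv A = B"
proof -
  have BA: "B ** A = mat 1" using assms matrix_left_right_inverse by blast
  hence inv: "invertible A" using assms unfolding invertible_def by blast
  have "matrix_inv A = matrix_inv A ** (A ** B)" using assms by simp
  also have "\<dots> = (matrix_inv A ** A) ** B" by (simp add: matrix_mul_assoc)
  also have "\<dots> = B" using inv_facts[OF inv] by simp
  finally show ?thesis .
qed

lemma eigenrow:
  fixes r :: "complex^('n::{finite,linorder})^('n::{finite,linorder})"
  assumes up: "upper_tri r" and dist: "\<forall>a b. a \<noteq> b \<longrightarrow> r $ a $ a \<noteq> r $ b $ b"
  shows "\<exists>x. x a = 1 \<and> (\<forall>c. x c \<noteq> 0 \<longrightarrow> a \<le> c) \<and> (\<forall>b. (\<Sum>c\<in>UNIV. x c * r$c$b) = r$a$a * x b)"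
proof -
  have "a \<in> A \<longrightarrow> (\<exists>x. x a = 1 \<and> (\<forall>c. x c \<noteq> 0 \<longrightarrow> a \<le> c \<and> c \<in> A) \<and>
           (\<forall>b\<in>A. (\<Sum>c\<in>UNIV. x c * r$c$b) = r$a$a * x b))" if "finite A" for A
    using that
  proof (induction A rule: finite_linorder_max_induct)
    case empty then show ?case by simp
  next
    case (insert b A)
    show ?case
    proof
      assume aA: "a \<in> insert b A"
      show "\<exists>x. x a = 1 \<and> (\<forall>c. x c \<noteq> 0 \<longrightarrow> a \<le> c \<and> c \<in> insert b A) \<and>
           (\<forall>b'\<in>insert b A. (\<Sum>c\<in>UNIV. x c * r$c$b') = r$a$a * x b')"
      proof (cases "a = b")
        case True
        define x where "x = (\<lambda>c. if c = a then (1::complex) else 0)"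
        have "(\<Sum>c\<in>UNIV. x c * r$c$b') = r$a$a * x b'" if "b' \<in> insert b A" for b'
        proof -
          have "(\<Sum>c\<in>UNIV. x c * r$c$b') = x a * r$a$b'" by (rule sum_single) (simp add: x_def)
          also have "\<dots> = r$a$a * x b'"
          proof (cases "b' = a")
            case False
            hence "b' < a" using that True insert.hyps(2) by auto
            thus ?thesis using up False unfolding upper_tri_def x_def by auto
          qed (simp add: x_def)
          finally show ?thesis .
        qed
        thus ?thesis using True by (intro exI[of _ x]) (auto simp: x_def)
      next
        case False
        hence aA': "a \<in> A" using aA by auto
        with insert.IH obtain x where x1: "x a = 1" and xs: "\<forall>c. x c \<noteq> 0 \<longrightarrow> a \<le> c \<and> c \<in> A"
          and xe: "\<forall>b'\<in>A. (\<Sum>c\<in>UNIV. x c * r$c$b') = r$a$a * x b'" by blast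
        have xb: "x b = 0" using xs insert.hyps(2) by fastforce
        have ab: "a < b" using aA' insert.hyps(2) by auto
        define S where "S = (\<Sum>c\<in>UNIV. x c * r$c$b)"
        define l where "l = S / (r$a$a - r$b$b)"
        have nz: "r$a$a - r$b$b \<noteq> 0" using dist False by auto
        define y where "y = (\<lambda>c. x c + (if c = b then l else 0))"
        have ysum: "(\<Sum>c\<in>UNIV. y c * r$c$b') = (\<Sum>c\<in>UNIV. x c * r$c$b') + l * r$b$b'" for b'
        proof -
          have "(\<Sum>c\<in>UNIV. y c * r$c$b') = (\<Sum>c\<in>UNIV. x c * r$c$b') + (\<Sum>c\<in>UNIV. (if c = b then l else 0) * r$c$b')"
            unfolding y_def by (simp add: distrib_right sum.distrib)
          also have "(\<Sum>c\<in>UNIV. (if c = b then l else 0) * r$c$b') = l * r$b$b'"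
            by (subst sum_single[of b]) auto
          finally show ?thesis .
        qed
        have "(\<Sum>c\<in>UNIV. y c * r$c$b') = r$a$a * y b'" if "b' \<in> insert b A" for b'
        proof (cases "b' = b")
          case True
          have "S + l * r$b$b = r$a$a * l" using nz unfolding l_def by (simp add: field_simps)
          thus ?thesis using True ysum xb unfolding y_def S_def by simp
        next
          case False
          hence "b' \<in> A" using that by auto
          hence "b' < b" using insert.hyps(2) by auto
          hence "r$b$b' = 0" using up unfolding upper_tri_def by auto
          thus ?thesis using ysum xe \<open>b' \<in> A\<close> False unfolding y_def by simp
        qed
        moreover have "y a = 1" using x1 ab unfolding y_def by simp
        moreover have "\<forall>c. y c \<noteq> 0 \<longrightarrow> a \<le> c \<and> c \<in> insert b A"
          using xs ab unfolding y_def by auto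
        ultimately show ?thesis by blast
      qed
    qed
  qed
  from this[of UNIV] show ?thesis by auto
qed


lemma diag_mult_left:
  fixes X :: "complex^('n::finite)^('n::finite)"
  shows "((\<chi> a b. if a = b then f a else 0) ** X) $ a $ b = f a * X $ a $ b"
  unfolding matrix_matrix_mult_def by (simp, subst sum_single[of a]) auto

lemma diag_mult_right:
  fixes X :: "complex^('n::finite)^('n::finite)"
  shows "(X ** (\<chi> a b. if a = b then f a else 0)) $ a $ b = X $ a $ b * f b"
  unfolding matrix_matrix_mult_def by (simp, subst sum_single[of b]) auto

lemma upper_exists:
  fixes r :: "complex^('n::{finite,linorder})^('n::{finite,linorder})"
  assumes up: "upper_tri r" and dist: "\<forall>a b. a \<noteq> b \<longrightarrow> r $ a $ a \<noteq> r $ b $ b"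
  shows "\<exists>u. upper_tri u \<and> (\<forall>a. u$a$a = 1) \<and> u ** r = diag_part r ** u"
proof -
  have "\<forall>a. \<exists>x. x a = 1 \<and> (\<forall>c. x c \<noteq> 0 \<longrightarrow> a \<le> c) \<and> (\<forall>b. (\<Sum>c\<in>UNIV. x c * r$c$b) = r$a$a * x b)"
    using eigenrow[OF up dist] by blast
  then obtain X where X: "\<And>a. X a a = 1" "\<And>a c. X a c \<noteq> 0 \<Longrightarrow> a \<le> c"
    "\<And>a b. (\<Sum>c\<in>UNIV. X a c * r$c$b) = r$a$a * X a b" by metis
  define u where "u = (\<chi> a c. X a c)"
  have "upper_tri u" unfolding upper_tri_def u_def using X(2) by (auto simp: not_le[symmetric])
  moreover have "\<forall>a. u$a$a = 1" using X(1) by (simp add: u_def)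
  moreover have "u ** r = diag_part r ** u"
  proof -
    have dp: "diag_part r = (\<chi> a b. if a = b then r$a$a else 0)"
      unfolding diag_part_def by (simp add: vec_eq_iff)
    show ?thesis unfolding dp
      by (simp add: vec_eq_iff diag_mult_left) (simp add: matrix_matrix_mult_def u_def X(3))
  qed
  ultimately show ?thesis by blast
qed

lemma unit_upper_invertible:
  fixes u :: "complex^('n::{finite,linorder})^('n::{finite,linorder})"
  assumes up: "upper_tri u" and d: "\<forall>a. u$a$a = 1"
  shows "invertible u"
proof -
  have "x = 0" if x: "u *v x = 0" for x
  proof -
    have "x $ a = 0" for a
    proof (induction a rule: down_induct)
      case (1 a)
      have "0 = (u *v x) $ a" using x by simp
      also have "\<dots> = (\<Sum>c\<in>UNIV. u$a$c * x$c)" by (simp add: matrix_vector_mult_def)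
      also have "\<dots> = u$a$a * x$a"
      proof (rule sum_single)
        fix c assume "c \<noteq> a"
        then consider "c < a" | "a < c" by fastforce
        thus "u$a$c * x$c = 0" using up 1 unfolding upper_tri_def by cases auto
      qed
      finally show ?case using d by simp
    qed
    thus ?thesis by (simp add: vec_eq_iff)
  qed
  thus ?thesis using matrix_left_invertible_ker invertible_left_inverse by blast
qed

lemma inv_upper:
  fixes u w :: "complex^('n::{finite,linorder})^('n::{finite,linorder})"
  assumes up: "upper_tri u" and d: "\<forall>a. u$a$a = 1" and uw: "u ** w = mat 1"
  shows "upper_tri w"
proof -
  have "\<forall>b. b < a \<longrightarrow> w$a$b = 0" for a
  proof (induction a rule: down_induct)
    case (1 a)
    show ?case
    proof (intro allI impI)
      fix b assume ba: "b < a"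
      have "0 = (u ** w) $ a $ b" using uw ba by (simp add: mat_def)
      also have "\<dots> = (\<Sum>c\<in>UNIV. u$a$c * w$c$b)" by (simp add: matrix_matrix_mult_def)
      also have "\<dots> = u$a$a * w$a$b"
      proof (rule sum_single)
        fix c assume "c \<noteq> a"
        then consider "c < a" | "a < c" by fastforce
        thus "u$a$c * w$c$b = 0" using up 1 ba unfolding upper_tri_def by cases auto
      qed
      finally show "w$a$b = 0" using d by simp
    qed
  qed
  thus ?thesis unfolding upper_tri_def by blast
qed

lemma conj_lower_zero:
  fixes u w Z :: "complex^('n::{finite,linorder})^('n::{finite,linorder})"
  assumes up: "upper_tri u" "upper_tri w" and Z: "\<And>a b. \<not> a < b \<Longrightarrow> Z$a$b = 0" and ba: "b \<le> a"
  shows "(u ** Z ** w) $ a $ b = 0"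
proof -
  have uz: "(u ** Z) $ a $ d = 0" if "d \<le> a" for d
    unfolding matrix_matrix_mult_def using up(1) Z that unfolding upper_tri_def
    by (simp, intro sum.neutral) (metis le_less_trans less_le_not_le mult_eq_0_iff not_le)
  show ?thesis
    unfolding matrix_matrix_mult_def[of "u ** Z" w]
    using up(2) uz ba unfolding upper_tri_def
    by (simp, intro sum.neutral) (metis dual_order.trans mult_eq_0_iff not_le)
qed


lemma mm_add_r: "((A::complex^('n::finite)^('m::finite)) + B) ** (C::complex^('p::finite)^'n) = A ** C + B ** C"
  by (vector matrix_matrix_mult_def sum.distrib[symmetric] field_simps)
lemma mm_diff_r: "((A::complex^('n::finite)^('m::finite)) - B) ** (C::complex^('p::finite)^'n) = A ** C - B ** C"
  by (vector matrix_matrix_mult_def sum_subtractf[symmetric] field_simps)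
lemma mm_diff_l: "(C::complex^('n::finite)^('m::finite)) ** (A - B) = C ** A - C ** B"
  by (vector matrix_matrix_mult_def sum_subtractf[symmetric] field_simps)

lemma outer_conj: "(u::complex^('n::finite)^('n::finite)) ** outer i j ** w = outer (u *v i) (j v* w)"
  by (simp add: vec_eq_iff matrix_matrix_mult_def outer_def matrix_vector_mult_def vector_matrix_mult_def
      sum_distrib_left sum_distrib_right mult_ac)

lemma moment_eq:
  fixes r s u w :: "complex^('n::{finite,linorder})^('n::{finite,linorder})" and i j :: "complex^('n::{finite,linorder})"
  assumes mom: "moment (r, s, i, j) = 0" and up: "upper_tri u" "upper_tri w"
    and uw: "u ** w = mat 1" and wu: "w ** u = mat 1" and ur: "u ** r = diag_part r ** u"
    and ba: "b \<le> a"
  shows "r$a$a * (u ** s ** w)$a$b - (u ** s ** w)$a$b * r$b$b + (u *v i)$a * (j v* w)$b = 0"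
proof -
  define Dm where "Dm = diag_part r"
  define M where "M = u ** s ** w"
  define Z where "Z = r ** s - s ** r + outer i j"
  have Dmf: "Dm = (\<chi> a b. if a = b then r$a$a else 0)"
    unfolding Dm_def diag_part_def by (simp add: vec_eq_iff)
  have Z0: "Z$a$b = 0" if "\<not> a < b" for a b
  proof -
    have "mod_nplus Z $ a $ b = 0" using mom unfolding moment_def Z_def by simp
    thus ?thesis using that unfolding mod_nplus_def by simp
  qed
  have rw: "r ** w = w ** Dm"
  proof -
    have "r ** w = (w ** u) ** r ** w" using wu by simp
    also have "\<dots> = w ** (u ** r) ** w" by (simp add: matrix_mul_assoc)
    also have "\<dots> = w ** Dm ** (u ** w)" using ur by (simp add: Dm_def matrix_mul_assoc)
    finally show ?thesis using uw by simp
  qed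
  have c1: "u ** (r ** s) ** w = Dm ** M"
    using ur by (simp add: M_def Dm_def matrix_mul_assoc)
  have c2: "u ** (s ** r) ** w = M ** Dm"
  proof -
    have "u ** (s ** r) ** w = u ** s ** (r ** w)" by (simp add: matrix_mul_assoc)
    thus ?thesis using rw by (simp add: M_def matrix_mul_assoc)
  qed
  have "u ** Z ** w = Dm ** M - M ** Dm + outer (u *v i) (j v* w)"
    unfolding Z_def by (simp add: matrix_add_ldistrib mm_diff_l mm_add_r mm_diff_r c1 c2 outer_conj)
  hence "(Dm ** M - M ** Dm + outer (u *v i) (j v* w)) $ a $ b = 0"
    using conj_lower_zero[OF up, of Z b a] Z0 ba by metis
  thus ?thesis unfolding Dmf by (simp add: diag_mult_left diag_mult_right outer_def M_def mult_ac)
qed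


lemma diag_vec_left:
  fixes v :: "complex^('n::finite)"
  shows "((\<chi> a b. if a = b then f a else 0) *v v) $ a = f a * v $ a"
  unfolding matrix_vector_mult_def by (simp, subst sum_single[of a]) auto

lemma diag_vec_right:
  fixes v :: "complex^('n::finite)"
  shows "(v v* (\<chi> a b. if a = b then f a else 0)) $ b = v $ b * f b"
  unfolding vector_matrix_mult_def by (simp, subst sum_single[of b]) auto

theorem mainTheorem18:
  fixes r s :: "complex^('n::{finite,linorder})^('n::{finite,linorder})" and i j :: "complex^('n::{finite,linorder})"
  assumes "(r, s, i, j) \<in> mu_zero_rss"
  shows "\<exists>d. is_diag d \<and> (diag_part r, d, 0, 0) \<in> closure (B_orbit (r, s, i, j))"
proof -
  from assms have up: "upper_tri r" and mom: "moment (r, s, i, j) = 0"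
    and dist: "\<forall>a b. a \<noteq> b \<longrightarrow> r $ a $ a \<noteq> r $ b $ b"
    unfolding mu_zero_rss_def by auto
  obtain u where uup: "upper_tri u" and ud: "\<forall>a. u$a$a = 1" and ur: "u ** r = diag_part r ** u"
    using upper_exists[OF up dist] by blast
  have uinv: "invertible u" using unit_upper_invertible[OF uup ud] .
  define w where "w = matrix_inv u"
  have uw: "u ** w = mat 1" and wu: "w ** u = mat 1" using inv_facts[OF uinv] by (auto simp: w_def)
  have wup: "upper_tri w" using inv_upper[OF uup ud uw] .
  define Dm where "Dm = diag_part r"
  have Dmf: "Dm = (\<chi> a b. if a = b then r$a$a else 0)"
    unfolding Dm_def diag_part_def by (simp add: vec_eq_iff)
  define M where "M = u ** s ** w"
  define i' where "i' = u *v i"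
  define j' where "j' = j v* w"
  have E: "r$a$a * M$a$b - M$a$b * r$b$b + i'$a * j'$b = 0" if "b \<le> a" for a b
    using moment_eq[OF mom uup wup uw wu ur that] unfolding M_def i'_def j'_def .
  have urw: "u ** r ** w = Dm"
  proof -
    have "u ** r ** w = Dm ** (u ** w)" using ur by (simp add: Dm_def matrix_mul_assoc)
    thus ?thesis using uw by simp
  qed
  define tau where "tau = (\<lambda>(e::complex) a. if i'$a \<noteq> 0 then e else if j'$a \<noteq> 0 then 1/e else 1)"
  define t where "t = (\<lambda>e. (\<chi> a b. if a = b then tau e a else 0))"
  define ti where "ti = (\<lambda>e. (\<chi> a b. if a = b then inverse (tau e a) else 0))"
  define g where "g = (\<lambda>e. t e ** u)"
  define F where "F = (\<lambda>e. (Dm, (\<chi> a b. if a < b then 0 else if a = b then M$a$a else e * e * M$a$b),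
                           e *s i', e *s j'))"
  have key: "B_act (g e) (r, s, i, j) \<in> B_orbit (r, s, i, j) \<and> B_act (g e) (r, s, i, j) = F e"
    if e0: "e \<noteq> 0" for e
  proof -
    have tnz: "tau e a \<noteq> 0" for a using e0 unfolding tau_def by auto
    have tti: "t e ** ti e = mat 1"
      using tnz by (simp add: vec_eq_iff t_def ti_def diag_mult_left mat_def)
    have gi: "g e ** (w ** ti e) = mat 1"
    proof -
      have "g e ** (w ** ti e) = t e ** (u ** w) ** ti e" by (simp add: g_def matrix_mul_assoc)
      thus ?thesis using uw tti by simp
    qed
    have ginv: "matrix_inv (g e) = w ** ti e" using inv_unique[OF gi] .
    have "invertible (g e)" using gi matrix_left_right_inverse unfolding invertible_def by blast
    moreover have "upper_tri (g e)"
      using uup unfolding upper_tri_def g_def t_def by (simp add: diag_mult_left)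
    ultimately have gB: "g e \<in> borel" unfolding borel_def by simp
    have p1: "g e ** r ** matrix_inv (g e) = Dm"
    proof -
      have "g e ** r ** matrix_inv (g e) = t e ** (u ** r ** w) ** ti e"
        unfolding ginv by (simp add: g_def matrix_mul_assoc)
      also have "\<dots> = Dm" unfolding urw
        using tnz by (simp add: vec_eq_iff t_def ti_def Dmf diag_mult_left diag_mult_right)
      finally show ?thesis .
    qed
    have p2: "mod_nplus (g e ** s ** matrix_inv (g e)) =
        (\<chi> a b. if a < b then 0 else if a = b then M$a$a else e * e * M$a$b)"
    proof -
      have "g e ** s ** matrix_inv (g e) = t e ** M ** ti e"
        unfolding ginv by (simp add: g_def M_def matrix_mul_assoc)
      moreover have "(t e ** M ** ti e) $ a $ b = e * e * M$a$b" if "b < a" for a b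
      proof (cases "M$a$b = 0")
        case False
        have "(r$a$a - r$b$b) * M$a$b + i'$a * j'$b = 0" using E[of b a] that
          by (simp add: algebra_simps)
        moreover have "r$a$a - r$b$b \<noteq> 0" using dist that by auto
        ultimately have ij: "i'$a \<noteq> 0" "j'$b \<noteq> 0" using False by auto
        have "i'$b * j'$b = 0" using E[of b b] by simp
        hence "i'$b = 0" using ij by simp
        hence "tau e a = e" "tau e b = 1/e" using ij unfolding tau_def by auto
        thus ?thesis by (simp add: t_def ti_def diag_mult_left diag_mult_right)
      qed (simp add: t_def ti_def diag_mult_left diag_mult_right)
      moreover have "(t e ** M ** ti e) $ a $ a = M$a$a" for a
        using tnz by (simp add: t_def ti_def diag_mult_left diag_mult_right)
      ultimately show ?thesis unfolding mod_nplus_def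
        by (simp add: vec_eq_iff)
    qed
    have p3: "g e *v i = e *s i'"
    proof -
      have "g e *v i = t e *v i'" by (simp add: g_def i'_def matrix_vector_mul_assoc)
      thus ?thesis by (simp add: vec_eq_iff t_def diag_vec_left tau_def)
    qed
    have p4: "j v* matrix_inv (g e) = e *s j'"
    proof -
      have "j v* matrix_inv (g e) = j' v* ti e" unfolding ginv by (simp add: j'_def vector_matrix_mul_assoc)
      moreover have "(j' v* ti e) $ b = e * j'$b" for b
      proof (cases "j'$b = 0")
        case False
        have "i'$b * j'$b = 0" using E[of b b] by simp
        hence "i'$b = 0" using False by simp
        thus ?thesis using False e0 by (simp add: ti_def diag_vec_right tau_def)
      qed (simp add: ti_def diag_vec_right)
      ultimately show ?thesis by (simp add: vec_eq_iff)
    qed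
    show ?thesis using gB p1 p2 p3 p4
      unfolding B_orbit_def B_act_def F_def by auto
  qed
  define es where "es = (\<lambda>n. complex_of_real (inverse (real (Suc n))))"
  have esnz: "es n \<noteq> 0" for n unfolding es_def of_real_eq_0_iff inverse_nonzero_iff_nonzero by (simp del: of_nat_Suc)
  have es0: "es \<longlonglongrightarrow> 0"
    unfolding es_def using tendsto_of_real[OF LIMSEQ_inverse_real_of_nat, where 'a=complex] by (simp only: of_real_0)
  have lim: "(\<lambda>n. F (es n)) \<longlonglongrightarrow> (Dm, diag_part M, 0, 0)"
  proof -
    have l2: "(\<lambda>n. \<chi> a b. if a < b then 0 else if a = b then M$a$a else es n * es n * M$a$b)
               \<longlonglongrightarrow> (\<chi> a b. if a < b then 0 else if a = b then M$a$a else 0 * 0 * M$a$b)"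
    proof (intro tendsto_intros)
      fix a b
      have m: "(\<lambda>n. es n * es n * M$a$b) \<longlonglongrightarrow> 0 * 0 * M$a$b"
        by (intro tendsto_mult es0 tendsto_const)
      show "(\<lambda>n. if a < b then 0 else if a = b then M$a$a else es n * es n * M$a$b)
               \<longlonglongrightarrow> (if a < b then 0 else if a = b then M$a$a else 0 * 0 * M$a$b)"
        using m by (cases "a < b"; cases "a = b") (simp_all only: if_True if_False tendsto_const simp_thms)
    qed
    have dM: "(\<chi> a b. if a < b then 0 else if a = b then M$a$a else 0 * 0 * M$a$b) = diag_part M"
      unfolding diag_part_def by (simp add: vec_eq_iff)
    have l3: "(\<lambda>n. es n *s i') \<longlonglongrightarrow> 0 *s i'" "(\<lambda>n. es n *s j') \<longlonglongrightarrow> 0 *s j'"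
      unfolding vector_scalar_mult_def by (intro tendsto_intros es0)+
    show ?thesis unfolding F_def using l2 l3 dM
      by (intro tendsto_Pair tendsto_const) (auto simp: vector_scalar_mult_def zero_vec_def)
  qed
  have "(Dm, diag_part M, 0, 0) \<in> closure (B_orbit (r, s, i, j))"
    unfolding closure_sequential
    using key[OF esnz] lim by (intro exI[of _ "\<lambda>n. F (es n)"]) metis
  moreover have "is_diag (diag_part M)" unfolding is_diag_def diag_part_def by simp
  ultimately show ?thesis unfolding Dm_def by blast
qed

end
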